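(* Assume $\tau<1$. For every measurable $f:\mathcal X\to\mathbb R^d$ with bounded norm, $$\mathcal L^{\mu}_{sup}(f)\le\frac{1}{1-\tau}\big(\mathcal L_{nce}(f)-\tau\big).$$
   Context: $\mathcal X$ is a feature space. $\mathcal C$ is a set of latent classes with distribution $\rho$, and $\mathcal D_c$ is a distribution on $\mathcal X$ for each $c\in\mathcal C$. $\sigma(z)=1/(1+e^{-z})$ and $\log$ is natural. $(x,x^+)\sim\mathcal D_{sim}$ means $c\sim\rho$, then $x,x^+$ i.i.d. $\sim\mathcal D_c$. $x^-\sim\mathcal D_{neg}$ means $c'\sim\rho$, then $x^-\sim\mathcal D_{c'}$, independently. The NCE loss is $$\mathcal L_{nce}(f)=-\mathbb E\big[\log\sigma(f(x)^Tf(x^+))+\log\sigma(-f(x)^Tf(x^-))\big]$$ under these draws. $\tau=\Pr_{c,c'\sim\rho\text{ i.i.d.}}[c=c']$. The class means are $\mu_c=\mathbb E_{x\sim\mathcal D_c}[f(x)]$. The supervised loss is $$\mathcal L^{\mu}_{sup}(f)=\mathbb E_{(c,c')\sim\rho\otimes\rho\mid c\ne c'}\,\mathbb E_{x\sim\mathcal D_c}\big[-\log\sigma(f(x)^T\mu_c)-\log\sigma(-f(x)^T\mu_{c'})\big].$$ *)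

theory Defs
  imports "HOL-Probability.Probability"
begin

definition sigmoid :: "real \<Rightarrow> real" where
  "sigmoid z = 1 / (1 + exp (- z))"

definition coll_prob :: "'c pmf \<Rightarrow> real" where
  "coll_prob \<rho> = measure_pmf.prob (pair_pmf \<rho> \<rho>) {(c, c'). c = c'}"

definition class_mean :: "('c \<Rightarrow> 'x measure) \<Rightarrow> ('x \<Rightarrow> real^'d) \<Rightarrow> 'c \<Rightarrow> real^'d" where
  "class_mean D f c = (\<integral>x. f x \<partial>(D c))"

definition L_nce :: "'c pmf \<Rightarrow> ('c \<Rightarrow> 'x measure) \<Rightarrow> ('x \<Rightarrow> real^'d) \<Rightarrow> real" where
  "L_nce \<rho> D f =
     - (\<integral>c. \<integral>c'. \<integral>x. \<integral>xp. \<integral>xn.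
          ln (sigmoid (f x \<bullet> f xp)) + ln (sigmoid (- (f x \<bullet> f xn)))
        \<partial>(D c') \<partial>(D c) \<partial>(D c) \<partial>(measure_pmf \<rho>) \<partial>(measure_pmf \<rho>))"

definition L_sup_mu :: "'c pmf \<Rightarrow> ('c \<Rightarrow> 'x measure) \<Rightarrow> ('x \<Rightarrow> real^'d) \<Rightarrow> real" where
  "L_sup_mu \<rho> D f =
     (\<integral>cc. \<integral>x. - ln (sigmoid (f x \<bullet> class_mean D f (fst cc)))
                 - ln (sigmoid (- (f x \<bullet> class_mean D f (snd cc))))
        \<partial>(D (fst cc)) \<partial>(measure_pmf (cond_pmf (pair_pmf \<rho> \<rho>) {(c, c'). c \<noteq> c'})))"

end

theory Submission
  imports Defs
begin

definition phi :: "real \<Rightarrow> real" where "phi z = ln (1 + exp (- z))"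

lemma ln_sigmoid: "ln (sigmoid z) = - phi z"
  unfolding sigmoid_def phi_def by (simp add: ln_div add_pos_pos)

lemma phi_nonneg: "0 \<le> phi z"
  unfolding phi_def by simp

lemma phi_le: "phi z \<le> 1 + \<bar>z\<bar>"
proof -
  have "1 + exp (- z) \<le> 2 * exp \<bar>z\<bar>"
  proof -
    have "exp (- z) \<le> exp \<bar>z\<bar>" by simp
    moreover have "1 \<le> exp \<bar>z\<bar>" by simp
    ultimately show ?thesis by linarith
  qed
  then have "phi z \<le> ln (2 * exp \<bar>z\<bar>)" unfolding phi_def
    by (simp add: add_pos_pos)
  also have "\<dots> = ln 2 + \<bar>z\<bar>" by (simp add: ln_mult)
  also have "\<dots> \<le> 1 + \<bar>z\<bar>" using ln_le_minus_one[of 2] by simp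
  finally show ?thesis .
qed

lemma phi_sym: "1 \<le> phi z + phi (- z)"
proof -
  have "phi z + phi (-z) = ln ((1 + exp (-z)) * (1 + exp z))"
  proof -
    have a: "0 < 1 + exp (-z)" by (intro add_pos_pos) auto
    have b: "0 < 1 + exp z" by (intro add_pos_pos) auto
    show ?thesis unfolding phi_def using ln_mult[of "1 + exp (-z)" "1 + exp z"] a b by simp
  qed
  also have "(1 + exp (-z)) * (1 + exp z) = 2 + exp z + exp (-z)"
    by (simp add: algebra_simps exp_minus)
  finally have e: "phi z + phi (-z) = ln (2 + exp z + exp (-z))" .
  have "exp z + exp (-z) \<ge> 2"
  proof -
    have "(exp z - 1)^2 \<ge> 0" by simp
    then have "exp z * exp z + 1 \<ge> 2 * exp z" by (simp add: power2_eq_square algebra_simps)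
    then show ?thesis by (simp add: exp_minus field_simps)
  qed
  then have "ln 4 \<le> ln (2 + exp z + exp (-z))" by simp
  moreover have "1 \<le> ln (4::real)"
  proof -
    have "exp 1 \<le> (4::real)" using exp_le by simp
    then show ?thesis by (metis exp_gt_zero ln_exp ln_le_cancel_iff zero_less_numeral)
  qed
  ultimately show ?thesis using e by linarith
qed

lemma phi_tangent: "phi m + (sigmoid m - 1) * (y - m) \<le> phi y"
proof -
  define p where "p = sigmoid m"
  define q where "q = exp (- m) / (1 + exp (- m))"
  have p: "p = 1 / (1 + exp (- m))" unfolding p_def sigmoid_def by simp
  have d: "1 + exp (- m) > 0" by (simp add: pos_add_strict)
  have pq: "p + q = 1" unfolding p q_def using d by (simp add: add_divide_distrib[symmetric])
  have p0: "0 \<le> p" "0 \<le> q" unfolding p q_def by (auto simp: add_pos_pos)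
  have split: "1 + exp (- y) = (1 + exp (- m)) * (p + q * exp (- (y - m)))"
  proof -
    have "(1 + exp (- m)) * p = 1" "(1 + exp (- m)) * q = exp (- m)"
      unfolding p q_def using d by auto
    moreover have "exp (- m) * exp (- (y - m)) = exp (- y)" by (simp add: exp_add[symmetric])
    ultimately show ?thesis by (simp add: distrib_left mult.assoc[symmetric])
  qed
  have cv: "exp (p * 0 + q * (- (y - m))) \<le> p * exp 0 + q * exp (- (y - m))"
    using convex_onD[OF exp_convex, of q 0 "- (y - m)"] p0 pq
    by (simp add: algebra_simps) 
  have pos: "0 < p + q * exp (- (y - m))" using cv exp_gt_zero[of "q * (m - y)"] by (simp del: exp_gt_zero)
  have "phi y = phi m + ln (p + q * exp (- (y - m)))"
    unfolding phi_def split using d pos by (simp add: ln_mult)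
  moreover have "- q * (y - m) \<le> ln (p + q * exp (- (y - m)))"
  proof -
    have "exp (- q * (y - m)) \<le> p + q * exp (- (y - m))" using cv by (simp add: algebra_simps)
    then show ?thesis using pos by (subst ln_ge_iff) auto
  qed
  moreover have "sigmoid m - 1 = - q" using pq p_def by simp
  ultimately show ?thesis by simp
qed

lemma phi_meas[measurable]: "phi \<in> borel_measurable borel"
  unfolding phi_def by measurable

lemma int_bnd:
  fixes g :: "'a \<Rightarrow> real"
  assumes N: "prob_space N" and b: "\<And>y. y \<in> space N \<Longrightarrow> 0 \<le> g y \<and> g y \<le> K"
  shows "0 \<le> integral\<^sup>L N g \<and> integral\<^sup>L N g \<le> K"
proof -
  interpret prob_space N by (rule N)
  have "0 \<le> integral\<^sup>L N g" using b by (intro integral_nonneg_AE AE_I2) auto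
  moreover have "integral\<^sup>L N g \<le> K"
  proof (cases "integrable N g")
    case True
    have "integral\<^sup>L N g \<le> integral\<^sup>L N (\<lambda>_. K)"
      using b by (intro integral_mono True) auto
    then show ?thesis by (simp add: prob_space)
  next
    case False
    obtain y where "y \<in> space N" using not_empty by blast
    then have "0 \<le> K" using b by force
    then show ?thesis using False by (simp add: not_integrable_integral_eq)
  qed
  ultimately show ?thesis by blast
qed

lemma jensen_phi:
  fixes f :: "'a \<Rightarrow> real^'d"
  assumes N: "prob_space N" and f[measurable]: "f \<in> borel_measurable N"
    and b: "\<And>y. y \<in> space N \<Longrightarrow> norm (f y) \<le> B"
  shows "phi (a \<bullet> integral\<^sup>L N f) \<le> (\<integral>y. phi (a \<bullet> f y) \<partial>N)"
proof -
  interpret prob_space N by (rule N)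
  have fi: "integrable N f" using b by (intro integrable_const_bound[where B=B] AE_I2) auto
  define m where "m = a \<bullet> integral\<^sup>L N f"
  define s where "s = sigmoid m - 1"
  have gi: "integrable N (\<lambda>y. a \<bullet> f y)" using fi by simp
  have hi: "integrable N (\<lambda>y. phi m + s * (a \<bullet> f y - m))"
    using gi by simp
  have pi: "integrable N (\<lambda>y. phi (a \<bullet> f y))"
  proof (intro integrable_const_bound[where B="1 + norm a * B"] AE_I2)
    fix y assume y: "y \<in> space N"
    have "\<bar>a \<bullet> f y\<bar> \<le> norm a * norm (f y)" by (rule Cauchy_Schwarz_ineq2)
    also have "\<dots> \<le> norm a * B" using b[OF y] by (simp add: mult_left_mono)
    finally show "norm (phi (a \<bullet> f y)) \<le> 1 + norm a * B"
      using phi_le[of "a \<bullet> f y"] phi_nonneg[of "a \<bullet> f y"] by simp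
  qed measurable
  have "(\<integral>y. phi m + s * (a \<bullet> f y - m) \<partial>N) = phi m + s * ((\<integral>y. a \<bullet> f y \<partial>N) - m)"
    using gi by (simp add: integral_add integral_diff prob_space)
  also have "(\<integral>y. a \<bullet> f y \<partial>N) = m" unfolding m_def using fi by simp
  finally have eq: "(\<integral>y. phi m + s * (a \<bullet> f y - m) \<partial>N) = phi m" by simp
  have "(\<integral>y. phi m + s * (a \<bullet> f y - m) \<partial>N) \<le> (\<integral>y. phi (a \<bullet> f y) \<partial>N)"
    using hi pi by (intro integral_mono) (auto simp: s_def phi_tangent)
  then show ?thesis using eq m_def by simp
qed

lemma pmf_int:
  fixes g :: "'a \<Rightarrow> real"
  assumes "\<And>x. 0 \<le> g x \<and> g x \<le> C"
  shows "integrable (measure_pmf p) g"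
  using assms by (intro measure_pmf.integrable_const_bound[where B=C] AE_I2) auto

lemma pmf_bnd:
  fixes g :: "'a \<Rightarrow> real"
  assumes "\<And>x. 0 \<le> g x \<and> g x \<le> C"
  shows "0 \<le> measure_pmf.expectation p g \<and> measure_pmf.expectation p g \<le> C"
  using assms by (intro int_bnd prob_space_measure_pmf) auto

theorem lemma1:
  fixes \<rho> :: "'c pmf" and M :: "'x measure" and D :: "'c \<Rightarrow> 'x measure"
    and f :: "'x \<Rightarrow> real^'d"
  assumes D_prob: "\<And>c. prob_space (D c)"
    and D_sets: "\<And>c. sets (D c) = sets M"
    and tau_lt: "coll_prob \<rho> < 1"
    and f_meas: "f \<in> borel_measurable M"
    and f_bdd: "\<exists>B. \<forall>x\<in>space M. norm (f x) \<le> B"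
  shows "L_sup_mu \<rho> D f \<le> (1 / (1 - coll_prob \<rho>)) * (L_nce \<rho> D f - coll_prob \<rho>)"
proof -
  obtain B0 where B0: "\<forall>x\<in>space M. norm (f x) \<le> B0" using f_bdd by blast
  define B where "B = max B0 0"
  have B: "\<And>x. x \<in> space M \<Longrightarrow> norm (f x) \<le> B" "0 \<le> B" using B0 unfolding B_def by force+
  have spD: "\<And>c. space (D c) = space M" using D_sets by (rule sets_eq_imp_space_eq)
  have fm[measurable]: "\<And>c. f \<in> borel_measurable (D c)"
    using f_meas measurable_cong_sets[OF D_sets refl] by blast
  have sf: "\<And>c. sigma_finite_measure (D c)"
    using D_prob by (simp add: prob_space_imp_sigma_finite)
  define mu where "mu = class_mean D f"
  have mu_bnd: "norm (mu c) \<le> B" for c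
  proof -
    interpret prob_space "D c" by (rule D_prob)
    have "norm (mu c) \<le> (\<integral>x. norm (f x) \<partial>D c)"
      unfolding mu_def class_mean_def by (rule integral_norm_bound)
    also have "\<dots> \<le> B" using int_bnd[OF D_prob, of c "\<lambda>x. norm (f x)" B] B spD by auto
    finally show ?thesis .
  qed
  define K where "K = 1 + B * B"
  have ip: "\<bar>f x \<bullet> v\<bar> \<le> B * B" if "x \<in> space M" "norm v \<le> B" for x v
  proof -
    have "\<bar>f x \<bullet> v\<bar> \<le> norm (f x) * norm v" by (rule Cauchy_Schwarz_ineq2)
    also have "\<dots> \<le> B * B" using B that by (intro mult_mono) auto
    finally show ?thesis .
  qed
  have phiK: "0 \<le> phi (f x \<bullet> v) \<and> phi (f x \<bullet> v) \<le> K"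
     "0 \<le> phi (- (f x \<bullet> v)) \<and> phi (- (f x \<bullet> v)) \<le> K"
    if "x \<in> space M" "norm v \<le> B" for x v
    using ip[OF that] phi_le[of "f x \<bullet> v"] phi_le[of "- (f x \<bullet> v)"] phi_nonneg
    unfolding K_def by auto
  have fB: "\<And>y. y \<in> space M \<Longrightarrow> norm (f y) \<le> B" using B by blast
  define I1 where "I1 c x = (\<integral>xp. phi (f x \<bullet> f xp) \<partial>D c)" for c x
  define I2 where "I2 c x = (\<integral>xn. phi (- (f x \<bullet> f xn)) \<partial>D c)" for c x
  have int1: "integrable (D c) (\<lambda>xp. phi (f x \<bullet> f xp))" if "x \<in> space M" for c x
    using phiK(1)[OF that fB] spD by (intro finite_measure.integrable_const_bound[where B=K] AE_I2 prob_space.finite_measure D_prob) auto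
  have int2: "integrable (D c) (\<lambda>xp. phi (- (f x \<bullet> f xp)))" if "x \<in> space M" for c x
    using phiK(2)[OF that fB] spD by (intro finite_measure.integrable_const_bound[where B=K] AE_I2 prob_space.finite_measure D_prob) auto
  have I1b: "0 \<le> I1 c x \<and> I1 c x \<le> K" if "x \<in> space M" for c x
    unfolding I1_def using phiK(1)[OF that fB] spD by (intro int_bnd D_prob) auto
  have I2b: "0 \<le> I2 c x \<and> I2 c x \<le> K" if "x \<in> space M" for c x
    unfolding I2_def using phiK(2)[OF that fB] spD by (intro int_bnd D_prob) auto
  have I1m: "I1 c \<in> borel_measurable (D c')" for c c'
  proof -
    have "(\<lambda>x. \<integral>xp. phi (f x \<bullet> f xp) \<partial>D c) \<in> borel_measurable (D c')"
      by (rule sigma_finite_measure.borel_measurable_lebesgue_integral[OF sf]) measurable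
    then show ?thesis unfolding I1_def[abs_def] .
  qed
  have I2m: "I2 c \<in> borel_measurable (D c')" for c c'
  proof -
    have "(\<lambda>x. \<integral>xp. phi (- (f x \<bullet> f xp)) \<partial>D c) \<in> borel_measurable (D c')"
      by (rule sigma_finite_measure.borel_measurable_lebesgue_integral[OF sf]) measurable
    then show ?thesis unfolding I2_def[abs_def] .
  qed
  have ic: "\<And>c a. integrable (D c) (\<lambda>_. a::real)"
    using D_prob by (simp add: finite_measure.integrable_const prob_space.finite_measure)
  define H where "H c c' x = (\<integral>xp. \<integral>xn. phi (f x \<bullet> f xp) + phi (- (f x \<bullet> f xn)) \<partial>D c' \<partial>D c)"
    for c c' x
  have H_eq: "H c c' x = I1 c x + I2 c' x" if x: "x \<in> space M" for c c' x
  proof -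
    have "H c c' x = (\<integral>xp. phi (f x \<bullet> f xp) + I2 c' x \<partial>D c)"
      unfolding H_def I2_def
    proof (rule Bochner_Integration.integral_cong[OF refl])
      fix xp assume "xp \<in> space (D c)"
      show "(\<integral>xn. phi (f x \<bullet> f xp) + phi (- (f x \<bullet> f xn)) \<partial>D c') =
            phi (f x \<bullet> f xp) + (\<integral>xn. phi (- (f x \<bullet> f xn)) \<partial>D c')"
        using int2[OF x] ic by (simp add: integral_add prob_space.prob_space[OF D_prob])
    qed
    also have "\<dots> = I1 c x + I2 c' x"
      unfolding I1_def using int1[OF x] ic by (simp add: integral_add prob_space.prob_space[OF D_prob])
    finally show ?thesis .
  qed
  define G where "G c c' = (\<integral>x. phi (f x \<bullet> mu c) + phi (- (f x \<bullet> mu c')) \<partial>D c)" for c c'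
  have Gint: "integrable (D c) (\<lambda>x. phi (f x \<bullet> mu c) + phi (- (f x \<bullet> mu c')))" for c c'
  proof (intro finite_measure.integrable_const_bound[where B="K + K"] AE_I2 prob_space.finite_measure D_prob)
    fix x assume "x \<in> space (D c)"
    then have x: "x \<in> space M" using spD by simp
    show "norm (phi (f x \<bullet> mu c) + phi (- (f x \<bullet> mu c'))) \<le> K + K"
      using phiK(1)[OF x mu_bnd[of c]] phiK(2)[OF x mu_bnd[of c']] by simp
  qed measurable
  have Gb: "0 \<le> G c c' \<and> G c c' \<le> K + K" for c c'
    unfolding G_def
  proof (intro int_bnd D_prob)
    fix x assume "x \<in> space (D c)"
    then have x: "x \<in> space M" using spD by simp
    show "0 \<le> phi (f x \<bullet> mu c) + phi (- (f x \<bullet> mu c')) \<and> phi (f x \<bullet> mu c) + phi (- (f x \<bullet> mu c')) \<le> K + K"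
      using phiK(1)[OF x mu_bnd[of c]] phiK(2)[OF x mu_bnd[of c']] by simp
  qed
  have Gd: "1 \<le> G c c" for c
  proof -
    have "(\<integral>x. 1 \<partial>D c) \<le> G c c"
      unfolding G_def using Gint ic phi_sym by (intro integral_mono) auto
    then show ?thesis by (simp add: prob_space.prob_space[OF D_prob])
  qed
  have G_le: "G c c' \<le> (\<integral>x. H c c' x \<partial>D c)" for c c'
  proof -
    have "(\<integral>x. H c c' x \<partial>D c) = (\<integral>x. I1 c x + I2 c' x \<partial>D c)"
      using H_eq spD by (intro Bochner_Integration.integral_cong) auto
    moreover have "G c c' \<le> (\<integral>x. I1 c x + I2 c' x \<partial>D c)"
      unfolding G_def
    proof (intro integral_mono Gint)
      show "integrable (D c) (\<lambda>x. I1 c x + I2 c' x)"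
        using I1b I2b spD I1m I2m
        by (intro finite_measure.integrable_const_bound[where B="K + K"] AE_I2 prob_space.finite_measure D_prob
            borel_measurable_add) (auto simp: abs_le_iff, (smt (verit))+)
      fix x assume x: "x \<in> space (D c)"
      have "phi (f x \<bullet> mu c) \<le> I1 c x"
        unfolding I1_def mu_def class_mean_def
        by (rule jensen_phi[OF D_prob fm]) (use fB spD in auto)
      moreover have "phi ((- f x) \<bullet> mu c') \<le> (\<integral>xn. phi ((- f x) \<bullet> f xn) \<partial>D c')"
        unfolding mu_def class_mean_def
        by (rule jensen_phi[OF D_prob fm]) (use fB spD in auto)
      ultimately show "phi (f x \<bullet> mu c) + phi (- (f x \<bullet> mu c')) \<le> I1 c x + I2 c' x"
        unfolding I2_def by simp
    qed
    ultimately show ?thesis by simp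
  qed
  have Lnce: "L_nce \<rho> D f = (\<integral>c. \<integral>c'. \<integral>x. H c c' x \<partial>D c \<partial>\<rho> \<partial>\<rho>)"
    unfolding L_nce_def H_def ln_sigmoid
    by (simp only: minus_add_distrib[symmetric] integral_minus minus_minus)
  have Lsup: "L_sup_mu \<rho> D f = (\<integral>cc. G (fst cc) (snd cc) \<partial>cond_pmf (pair_pmf \<rho> \<rho>) {(c, c'). c \<noteq> c'})"
    unfolding L_sup_mu_def G_def ln_sigmoid mu_def by simp
  have Hb: "0 \<le> (\<integral>x. H c c' x \<partial>D c) \<and> (\<integral>x. H c c' x \<partial>D c) \<le> K + K" for c c'
  proof -
    have "(\<integral>x. H c c' x \<partial>D c) = (\<integral>x. I1 c x + I2 c' x \<partial>D c)"
      using H_eq spD by (intro Bochner_Integration.integral_cong) auto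
    moreover have "0 \<le> (\<integral>x. I1 c x + I2 c' x \<partial>D c) \<and> (\<integral>x. I1 c x + I2 c' x \<partial>D c) \<le> K + K"
      using I1b I2b spD by (intro int_bnd D_prob) (auto, (smt (verit))+)
    ultimately show ?thesis by simp
  qed
  define P where "P = pair_pmf \<rho> \<rho>"
  define S where "S = {(c::'c, c'::'c). c \<noteq> c'}"
  define E where "E = {(c::'c, c'::'c). c = c'}"
  define \<tau> where "\<tau> = coll_prob \<rho>"
  have tauE: "\<tau> = measure P E" unfolding \<tau>_def coll_prob_def P_def E_def ..
  have SE: "S = space (measure_pmf P) - E" unfolding S_def E_def by auto
  have mS: "measure P S = 1 - \<tau>" unfolding SE tauE by (rule measure_pmf.prob_compl) simp
  have ne: "set_pmf P \<inter> S \<noteq> {}" using mS tau_lt measure_pmf_zero_iff[of P S] \<tau>_def by auto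
  have eS: "emeasure P S = ennreal (1 - \<tau>)" using mS by (simp add: measure_pmf.emeasure_eq_measure)
  have eE: "emeasure P E = ennreal \<tau>" using tauE by (simp add: measure_pmf.emeasure_eq_measure)
  have step1: "(\<integral>c. \<integral>c'. G c c' \<partial>\<rho> \<partial>\<rho>) \<le> L_nce \<rho> D f"
    unfolding Lnce
  proof (rule integral_mono)
    show "integrable (measure_pmf \<rho>) (\<lambda>c. \<integral>c'. G c c' \<partial>\<rho>)"
      using Gb by (intro pmf_int pmf_bnd)
    show "integrable (measure_pmf \<rho>) (\<lambda>c. \<integral>c'. \<integral>x. H c c' x \<partial>D c \<partial>\<rho>)"
      using Hb by (intro pmf_int pmf_bnd)
    fix c assume "c \<in> space (measure_pmf \<rho>)"
    show "(\<integral>c'. G c c' \<partial>\<rho>) \<le> (\<integral>c'. \<integral>x. H c c' x \<partial>D c \<partial>\<rho>)"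
      using Gb Hb G_le by (intro integral_mono pmf_int) auto
  qed
  have step2: "ennreal (\<integral>c. \<integral>c'. G c c' \<partial>\<rho> \<partial>\<rho>) = (\<integral>\<^sup>+cc. ennreal (G (fst cc) (snd cc)) \<partial>P)"
  proof -
    have "(\<integral>\<^sup>+cc. ennreal (G (fst cc) (snd cc)) \<partial>P) = (\<integral>\<^sup>+c. \<integral>\<^sup>+c'. ennreal (G c c') \<partial>\<rho> \<partial>\<rho>)"
      unfolding P_def by (simp add: nn_integral_pair_pmf')
    also have "\<dots> = (\<integral>\<^sup>+c. ennreal (\<integral>c'. G c c' \<partial>\<rho>) \<partial>\<rho>)"
      using Gb by (intro nn_integral_cong nn_integral_eq_integral pmf_int AE_I2) auto
    also have "\<dots> = ennreal (\<integral>c. \<integral>c'. G c c' \<partial>\<rho> \<partial>\<rho>)"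
      using Gb by (intro nn_integral_eq_integral pmf_int pmf_bnd AE_I2) (auto intro: pmf_bnd)
    finally show ?thesis by simp
  qed
  have step3: "(\<integral>\<^sup>+cc. ennreal (G (fst cc) (snd cc)) \<partial>P) =
      (\<integral>\<^sup>+cc. ennreal (G (fst cc) (snd cc)) * indicator S cc \<partial>P) +
      (\<integral>\<^sup>+cc. ennreal (G (fst cc) (snd cc)) * indicator E cc \<partial>P)"
    by (subst nn_integral_add[symmetric]) (auto intro!: nn_integral_cong simp: S_def E_def split: split_indicator)
  have Lsup_nn: "ennreal (L_sup_mu \<rho> D f) = (\<integral>\<^sup>+cc. ennreal (G (fst cc) (snd cc)) \<partial>cond_pmf P S)"
    unfolding Lsup P_def[symmetric] S_def[symmetric]
    using Gb by (intro nn_integral_eq_integral[symmetric] pmf_int AE_I2) auto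
  have Lsup_nn0: "0 \<le> L_sup_mu \<rho> D f"
    unfolding Lsup P_def[symmetric] S_def[symmetric] using Gb by (intro pmf_bnd[THEN conjunct1])
  have step4: "(\<integral>\<^sup>+cc. ennreal (G (fst cc) (snd cc)) * indicator S cc \<partial>P) = ennreal ((1 - \<tau>) * L_sup_mu \<rho> D f)"
  proof -
    have "(\<integral>\<^sup>+cc. ennreal (G (fst cc) (snd cc)) \<partial>cond_pmf P S) =
        (\<integral>\<^sup>+cc. ennreal (G (fst cc) (snd cc)) * indicator S cc \<partial>P) / emeasure P S"
      unfolding cond_pmf.rep_eq[OF ne] by (rule nn_integral_uniform_measure) auto
    then have "emeasure P S * ennreal (L_sup_mu \<rho> D f) = 
        emeasure P S * ((\<integral>\<^sup>+cc. ennreal (G (fst cc) (snd cc)) * indicator S cc \<partial>P) / emeasure P S)"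
      using Lsup_nn by simp
    also have "\<dots> = (\<integral>\<^sup>+cc. ennreal (G (fst cc) (snd cc)) * indicator S cc \<partial>P)"
    proof -
      have e0: "ennreal (1 - coll_prob \<rho>) \<noteq> 0" using tau_lt by simp
      have et: "ennreal (1 - coll_prob \<rho>) \<noteq> top" by simp
      have ee: "ennreal (1 - coll_prob \<rho>) * X / ennreal (1 - coll_prob \<rho>) = X" for X
        using mult_divide_eq_ennreal[OF e0 et, of X] by (simp add: mult.commute)
      show ?thesis
      using ee ne measure_pmf_zero_iff[of P S] mS tau_lt \<tau>_def eS
      by (simp add: ennreal_times_divide)
    qed
    finally show ?thesis using eS tau_lt \<tau>_def Lsup_nn0 by (simp add: ennreal_mult)
  qed
  have step5: "ennreal \<tau> \<le> (\<integral>\<^sup>+cc. ennreal (G (fst cc) (snd cc)) * indicator E cc \<partial>P)"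
  proof -
    have "(\<integral>\<^sup>+cc. indicator E cc \<partial>P) \<le> (\<integral>\<^sup>+cc. ennreal (G (fst cc) (snd cc)) * indicator E cc \<partial>P)"
      using Gd by (intro nn_integral_mono) (auto simp: E_def split: split_indicator)
    then show ?thesis using eE by simp
  qed
  have "ennreal ((1 - \<tau>) * L_sup_mu \<rho> D f + \<tau>) \<le> ennreal (\<integral>c. \<integral>c'. G c c' \<partial>\<rho> \<partial>\<rho>)"
    unfolding step2 step3 step4 using step5 tau_lt \<tau>_def Lsup_nn0
    using tauE measure_nonneg[of P E]
    by (subst ennreal_plus) (auto intro: add_left_mono)
  then have "(1 - \<tau>) * L_sup_mu \<rho> D f + \<tau> \<le> L_nce \<rho> D f"
    using step1 Gb by (smt (verit) ennreal_le_iff pmf_bnd)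
  then show ?thesis using tau_lt unfolding \<tau>_def[symmetric]
    by (simp add: pos_le_divide_eq mult.commute)
qed
end
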